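(* Let $(X,\mathcal A,\mu,\mu^{\otimes2},R,I,\Pi_R,G,E_0,\eta)$ be an admissible structural model with $\eta\in[0,1)$, and assume the global decoupling condition \[\mu^{\otimes2}\big(((\Pi_R^{-1}(B)\setminus B)\times X)\cap G\big)=0\qquad\text{for all } B\in\mathcal A \text{ with } B\subseteq R.\] Then: (a) $\mu^{\otimes2}(G\setminus(R\times R))=0$, and for every $B\in\mathcal A$ with $B\subseteq R$, $\mu^{\otimes2}((B\times X)\cap G)=\mu^{\otimes2}((B\times R)\cap(G\cap(R\times R)))$; (b) for every $B\in\mathcal A$ with $B\subseteq R$, \[\mu^{\otimes2}((B\times X)\cap G)=\frac{\mu(B)}{1-\eta}.\]
   Context: For a nonempty set $X$, an algebra $\mathcal A\subseteq\mathcal P(X)$ contains $\varnothing,X$ and is closed under finite unions and complements. A finitely additive measure satisfies $\mu(\varnothing)=0$ and additivity on disjoint pairs. $\mathcal A\otimes\mathcal A$ is the algebra generated by rectangles $B_1\times B_2$, $B_i\in\mathcal A$. For relations, $H\circ K=\{(x,z):\exists y\,(x,y)\in H,(y,z)\in K\}$. A pre-structural datum is a tuple $(X,\mathcal A,\mu,\mu^{\otimes2},R,I,\Pi_R,G,E_0,\eta)$ where: $X$ nonempty; $\mathcal A$ an algebra on $X$; $\mu:\mathcal A\to[0,\infty)$ finitely additive; $\mu^{\otimes2}:\mathcal A\otimes\mathcal A\to[0,\infty)$ finitely additive with $\mu^{\otimes2}(B_1\times B_2)=\mu(B_1)\mu(B_2)$; $R,I\in\mathcal A$ disjoint; $\Pi_R:X\to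 R$ a map; $G\in\mathcal A\otimes\mathcal A$; $E_0\in(0,\infty)$; $\eta\in[0,1]$. Axiom I: $\Pi_R\circ\Pi_R=\Pi_R$, $\Pi_R(r)=r$ for $r\in R$, and $\Pi_R^{-1}(B)\in\mathcal A$ for $B\in\mathcal A$, $B\subseteq R$. Axiom II: $G$ reflexive, symmetric, $G\circ G=G$. Axiom III: (a) $\mu(R)+\mu(I)=E_0$; (b) $\mu(\Pi_R^{-1}(B))=\mu(B)$ for $B\in\mathcal A$, $B\subseteq R$; (c) for all $B\in\mathcal A$, $\mu^{\otimes2}((B\times X)\cap G)=\mu(B)+\eta\,\mu^{\otimes2}((\Pi_R^{-1}(B)\times X)\cap G)$. An admissible structural model is a pre-structural datum satisfying Axioms I–III. *)

theory Defs
  imports "HOL-Analysis.Analysis"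
begin

definition set_algebra :: "'a set \<Rightarrow> 'a set set \<Rightarrow> bool" where
  "set_algebra X A \<longleftrightarrow> A \<subseteq> Pow X \<and> {} \<in> A \<and> X \<in> A
     \<and> (\<forall>B\<in>A. \<forall>C\<in>A. B \<union> C \<in> A) \<and> (\<forall>B\<in>A. X - B \<in> A)"

definition fin_add_measure :: "'a set set \<Rightarrow> ('a set \<Rightarrow> real) \<Rightarrow> bool" where
  "fin_add_measure A m \<longleftrightarrow> (\<forall>B\<in>A. 0 \<le> m B) \<and> m {} = 0
     \<and> (\<forall>B\<in>A. \<forall>C\<in>A. B \<inter> C = {} \<longrightarrow> m (B \<union> C) = m B + m C)"

definition prod_algebra :: "'a set \<Rightarrow> 'a set set \<Rightarrow> ('a \<times> 'a) set set" where
  "prod_algebra X A = \<Inter> {S. set_algebra (X \<times> X) S \<and> (\<forall>B1\<in>A. \<forall>B2\<in>A. B1 \<times> B2 \<in> S)}"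

definition pre_structural ::
  "'a set \<Rightarrow> 'a set set \<Rightarrow> ('a set \<Rightarrow> real) \<Rightarrow> (('a \<times> 'a) set \<Rightarrow> real) \<Rightarrow> 'a set \<Rightarrow> 'a set
   \<Rightarrow> ('a \<Rightarrow> 'a) \<Rightarrow> ('a \<times> 'a) set \<Rightarrow> real \<Rightarrow> real \<Rightarrow> bool" where
  "pre_structural X A \<mu> \<mu>2 R I PiR G E0 \<eta> \<longleftrightarrow>
     X \<noteq> {} \<and> set_algebra X A \<and> fin_add_measure A \<mu>
     \<and> fin_add_measure (prod_algebra X A) \<mu>2
     \<and> (\<forall>B1\<in>A. \<forall>B2\<in>A. \<mu>2 (B1 \<times> B2) = \<mu> B1 * \<mu> B2)
     \<and> R \<in> A \<and> I \<in> A \<and> R \<inter> I = {}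
     \<and> (\<forall>x\<in>X. PiR x \<in> R)
     \<and> G \<in> prod_algebra X A \<and> 0 < E0 \<and> 0 \<le> \<eta> \<and> \<eta> \<le> 1"

definition axiom_I :: "'a set \<Rightarrow> 'a set set \<Rightarrow> 'a set \<Rightarrow> ('a \<Rightarrow> 'a) \<Rightarrow> bool" where
  "axiom_I X A R PiR \<longleftrightarrow> (\<forall>x\<in>X. PiR (PiR x) = PiR x) \<and> (\<forall>r\<in>R. PiR r = r)
     \<and> (\<forall>B\<in>A. B \<subseteq> R \<longrightarrow> PiR -` B \<inter> X \<in> A)"

definition axiom_II :: "'a set \<Rightarrow> ('a \<times> 'a) set \<Rightarrow> bool" where
  "axiom_II X G \<longleftrightarrow> (\<forall>x\<in>X. (x, x) \<in> G) \<and> sym G \<and> G O G = G"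

definition axiom_III ::
  "'a set \<Rightarrow> 'a set set \<Rightarrow> ('a set \<Rightarrow> real) \<Rightarrow> (('a \<times> 'a) set \<Rightarrow> real) \<Rightarrow> 'a set \<Rightarrow> 'a set
   \<Rightarrow> ('a \<Rightarrow> 'a) \<Rightarrow> ('a \<times> 'a) set \<Rightarrow> real \<Rightarrow> real \<Rightarrow> bool" where
  "axiom_III X A \<mu> \<mu>2 R I PiR G E0 \<eta> \<longleftrightarrow>
     \<mu> R + \<mu> I = E0
     \<and> (\<forall>B\<in>A. B \<subseteq> R \<longrightarrow> \<mu> (PiR -` B \<inter> X) = \<mu> B)
     \<and> (\<forall>B\<in>A. \<mu>2 ((B \<times> X) \<inter> G) = \<mu> B + \<eta> * \<mu>2 (((PiR -` B \<inter> X) \<times> X) \<inter> G))"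

definition admissible_model ::
  "'a set \<Rightarrow> 'a set set \<Rightarrow> ('a set \<Rightarrow> real) \<Rightarrow> (('a \<times> 'a) set \<Rightarrow> real) \<Rightarrow> 'a set \<Rightarrow> 'a set
   \<Rightarrow> ('a \<Rightarrow> 'a) \<Rightarrow> ('a \<times> 'a) set \<Rightarrow> real \<Rightarrow> real \<Rightarrow> bool" where
  "admissible_model X A \<mu> \<mu>2 R I PiR G E0 \<eta> \<longleftrightarrow>
     pre_structural X A \<mu> \<mu>2 R I PiR G E0 \<eta> \<and> axiom_I X A R PiR \<and> axiom_II X G
     \<and> axiom_III X A \<mu> \<mu>2 R I PiR G E0 \<eta>"

end

theory Submission
  imports Defs
begin

lemma alg_Int:
  assumes "set_algebra X S" "B \<in> S" "C \<in> S" shows "B \<inter> C \<in> S"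
proof -
  have sub: "B \<subseteq> X" "C \<subseteq> X" using assms unfolding set_algebra_def by auto
  have "X - ((X - B) \<union> (X - C)) \<in> S" using assms unfolding set_algebra_def by auto
  moreover have "X - ((X - B) \<union> (X - C)) = B \<inter> C" using sub by auto
  ultimately show ?thesis by simp
qed

lemma alg_Diff:
  assumes "set_algebra X S" "B \<in> S" "C \<in> S" shows "B - C \<in> S"
proof -
  have sub: "B \<subseteq> X" using assms unfolding set_algebra_def by auto
  have "B \<inter> (X - C) \<in> S" using assms alg_Int[of X S B "X - C"] unfolding set_algebra_def by auto
  moreover have "B \<inter> (X - C) = B - C" using sub by auto
  ultimately show ?thesis by simp
qed

lemma alg_sub: "set_algebra X S \<Longrightarrow> B \<in> S \<Longrightarrow> B \<subseteq> X"
  unfolding set_algebra_def by auto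

lemma prod_alg:
  assumes "set_algebra X A"
  shows "set_algebra (X \<times> X) (prod_algebra X A)"
    and "\<And>B1 B2. B1 \<in> A \<Longrightarrow> B2 \<in> A \<Longrightarrow> B1 \<times> B2 \<in> prod_algebra X A"
proof -
  let ?F = "{S. set_algebra (X \<times> X) S \<and> (\<forall>B1\<in>A. \<forall>B2\<in>A. B1 \<times> B2 \<in> S)}"
  have "Pow (X \<times> X) \<in> ?F" using assms unfolding set_algebra_def by auto
  hence ne: "?F \<noteq> {}" by blast
  show "set_algebra (X \<times> X) (prod_algebra X A)"
    unfolding prod_algebra_def set_algebra_def[of "X \<times> X" "\<Inter> ?F"]
  proof (intro conjI ballI)
    show "\<Inter> ?F \<subseteq> Pow (X \<times> X)" using \<open>Pow (X \<times> X) \<in> ?F\<close> by blast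
    show "{} \<in> \<Inter> ?F" by (auto simp: set_algebra_def)
    show "X \<times> X \<in> \<Inter> ?F" by (auto simp: set_algebra_def)
    show "B \<union> C \<in> \<Inter> ?F" if "B \<in> \<Inter> ?F" "C \<in> \<Inter> ?F" for B C
      using that by (auto simp: set_algebra_def)
    show "X \<times> X - B \<in> \<Inter> ?F" if "B \<in> \<Inter> ?F" for B
      using that by (auto simp: set_algebra_def)
  qed
  show "\<And>B1 B2. B1 \<in> A \<Longrightarrow> B2 \<in> A \<Longrightarrow> B1 \<times> B2 \<in> prod_algebra X A"
    unfolding prod_algebra_def by auto
qed

lemma fa_add:
  "fin_add_measure S m \<Longrightarrow> B \<in> S \<Longrightarrow> C \<in> S \<Longrightarrow> B \<inter> C = {} \<Longrightarrow> m (B \<union> C) = m B + m C"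
  unfolding fin_add_measure_def by auto

lemma fa_nonneg: "fin_add_measure S m \<Longrightarrow> B \<in> S \<Longrightarrow> 0 \<le> m B"
  unfolding fin_add_measure_def by auto

lemma fa_mono:
  assumes "fin_add_measure S m" "set_algebra Y S" "B \<in> S" "C \<in> S" "B \<subseteq> C"
  shows "m B \<le> m C"
proof -
  have d: "C - B \<in> S" using alg_Diff assms by blast
  have "m C = m (B \<union> (C - B))" using assms by (simp add: Un_absorb1 Un_Diff_cancel)
  also have "\<dots> = m B + m (C - B)" using fa_add[OF assms(1) assms(3) d] by auto
  finally show ?thesis using fa_nonneg[OF assms(1) d] by simp
qed

theorem theorem4p14:
  fixes X :: "'a set" and A :: "'a set set" and \<mu> :: "'a set \<Rightarrow> real"
    and \<mu>2 :: "('a \<times> 'a) set \<Rightarrow> real" and R I :: "'a set" and PiR :: "'a \<Rightarrow> 'a"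
    and G :: "('a \<times> 'a) set" and E0 \<eta> :: real
  assumes adm: "admissible_model X A \<mu> \<mu>2 R I PiR G E0 \<eta>"
    and eta_lt: "\<eta> < 1"
    and decoupling: "\<forall>B\<in>A. B \<subseteq> R \<longrightarrow> \<mu>2 ((((PiR -` B \<inter> X) - B) \<times> X) \<inter> G) = 0"
  shows "\<mu>2 (G - R \<times> R) = 0
      \<and> (\<forall>B\<in>A. B \<subseteq> R \<longrightarrow> \<mu>2 ((B \<times> X) \<inter> G) = \<mu>2 ((B \<times> R) \<inter> (G \<inter> R \<times> R)))
      \<and> (\<forall>B\<in>A. B \<subseteq> R \<longrightarrow> \<mu>2 ((B \<times> X) \<inter> G) = \<mu> B / (1 - \<eta>))"
proof -
  let ?P = "prod_algebra X A"
  have algA: "set_algebra X A" and faA: "fin_add_measure A \<mu>" and faP: "fin_add_measure ?P \<mu>2"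
    and rect: "\<forall>B1\<in>A. \<forall>B2\<in>A. \<mu>2 (B1 \<times> B2) = \<mu> B1 * \<mu> B2"
    and RA: "R \<in> A" and PiX: "\<forall>x\<in>X. PiR x \<in> R" and GP: "G \<in> ?P"
    and ax1: "axiom_I X A R PiR" and ax3: "axiom_III X A \<mu> \<mu>2 R I PiR G E0 \<eta>"
    using adm unfolding admissible_model_def pre_structural_def by auto
  have algP: "set_algebra (X \<times> X) ?P" and rP: "\<And>B1 B2. B1 \<in> A \<Longrightarrow> B2 \<in> A \<Longrightarrow> B1 \<times> B2 \<in> ?P"
    using prod_alg[OF algA] by auto
  have GX: "G \<subseteq> X \<times> X" using alg_sub[OF algP GP] .
  have XA: "X \<in> A" using algA unfolding set_algebra_def by auto
  have RX: "R \<subseteq> X" using alg_sub[OF algA RA] .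
  have cRA: "X - R \<in> A" using algA RA unfolding set_algebra_def by auto
  have fixR: "\<forall>r\<in>R. PiR r = r" and preA: "\<forall>B\<in>A. B \<subseteq> R \<longrightarrow> PiR -` B \<inter> X \<in> A"
    using ax1 unfolding axiom_I_def by auto
  have c: "\<forall>B\<in>A. \<mu>2 ((B \<times> X) \<inter> G) = \<mu> B + \<eta> * \<mu>2 (((PiR -` B \<inter> X) \<times> X) \<inter> G)"
    using ax3 unfolding axiom_III_def by auto
  have preR: "PiR -` R \<inter> X = X" using PiX by auto
  have z1: "\<mu>2 (((X - R) \<times> X) \<inter> G) = 0"
    using decoupling RA preR by auto
  have cR: "\<mu>2 (((X - R) \<times> X) \<inter> G) = \<mu> (X - R)"
  proof -
    have "PiR -` (X - R) \<inter> X = {}" using PiX by auto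
    hence "\<mu>2 (((PiR -` (X - R) \<inter> X) \<times> X) \<inter> G) = 0" using faP unfolding fin_add_measure_def by simp
    thus ?thesis using c cRA by auto
  qed
  have muc: "\<mu> (X - R) = 0" using z1 cR by simp
  have small: "\<mu>2 ((B \<times> (X - R)) \<inter> G) = 0" if "B \<in> A" for B
  proof -
    have "B \<times> (X - R) \<in> ?P" using rP that cRA by auto
    hence m1: "(B \<times> (X - R)) \<inter> G \<in> ?P" using alg_Int[OF algP _ GP] by auto
    have "\<mu>2 ((B \<times> (X - R)) \<inter> G) \<le> \<mu>2 (B \<times> (X - R))"
      using fa_mono[OF faP algP m1 \<open>B \<times> (X - R) \<in> ?P\<close>] by auto
    also have "\<dots> = 0" using rect that cRA muc by auto
    finally show ?thesis using fa_nonneg[OF faP m1] by linarith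
  qed
  have partA: "\<mu>2 (G - R \<times> R) = 0"
  proof -
    have e: "G - R \<times> R = (((X - R) \<times> X) \<inter> G) \<union> ((R \<times> (X - R)) \<inter> G)" using GX by auto
    have m1: "((X - R) \<times> X) \<inter> G \<in> ?P" using alg_Int[OF algP rP[OF cRA XA] GP] .
    have m2: "(R \<times> (X - R)) \<inter> G \<in> ?P" using alg_Int[OF algP rP[OF RA cRA] GP] .
    have "\<mu>2 (G - R \<times> R) = \<mu>2 (((X - R) \<times> X) \<inter> G) + \<mu>2 ((R \<times> (X - R)) \<inter> G)"
      unfolding e by (rule fa_add[OF faP m1 m2]) auto
    thus ?thesis using z1 small[OF RA] by simp
  qed
  have partB: "\<mu>2 ((B \<times> X) \<inter> G) = \<mu>2 ((B \<times> R) \<inter> (G \<inter> R \<times> R))" if B: "B \<in> A" "B \<subseteq> R" for B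
  proof -
    have e: "(B \<times> X) \<inter> G = ((B \<times> R) \<inter> G) \<union> ((B \<times> (X - R)) \<inter> G)" using RX by auto
    have m1: "(B \<times> R) \<inter> G \<in> ?P" using alg_Int[OF algP rP[OF B(1) RA] GP] .
    have m2: "(B \<times> (X - R)) \<inter> G \<in> ?P" using alg_Int[OF algP rP[OF B(1) cRA] GP] .
    have "\<mu>2 ((B \<times> X) \<inter> G) = \<mu>2 ((B \<times> R) \<inter> G) + \<mu>2 ((B \<times> (X - R)) \<inter> G)"
      unfolding e by (rule fa_add[OF faP m1 m2]) auto
    moreover have "(B \<times> R) \<inter> (G \<inter> R \<times> R) = (B \<times> R) \<inter> G" using B by auto
    ultimately show ?thesis using small[OF B(1)] by simp
  qed
  have partC: "\<mu>2 ((B \<times> X) \<inter> G) = \<mu> B / (1 - \<eta>)" if B: "B \<in> A" "B \<subseteq> R" for B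
  proof -
    let ?Q = "PiR -` B \<inter> X"
    have QA: "?Q \<in> A" using preA B by auto
    have BQ: "B \<subseteq> ?Q" using B fixR RX by auto
    have DA: "?Q - B \<in> A" using alg_Diff[OF algA QA B(1)] .
    have e: "(?Q \<times> X) \<inter> G = ((B \<times> X) \<inter> G) \<union> (((?Q - B) \<times> X) \<inter> G)" using BQ by auto
    have m1: "(B \<times> X) \<inter> G \<in> ?P" using alg_Int[OF algP rP[OF B(1) XA] GP] .
    have m2: "((?Q - B) \<times> X) \<inter> G \<in> ?P" using alg_Int[OF algP rP[OF DA XA] GP] .
    have "\<mu>2 ((?Q \<times> X) \<inter> G) = \<mu>2 ((B \<times> X) \<inter> G) + \<mu>2 (((?Q - B) \<times> X) \<inter> G)"
      unfolding e by (rule fa_add[OF faP m1 m2]) auto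
    hence eq: "\<mu>2 ((?Q \<times> X) \<inter> G) = \<mu>2 ((B \<times> X) \<inter> G)" using decoupling B by simp
    have "\<mu>2 ((B \<times> X) \<inter> G) = \<mu> B + \<eta> * \<mu>2 ((B \<times> X) \<inter> G)" using c B(1) eq by metis
    hence "(1 - \<eta>) * \<mu>2 ((B \<times> X) \<inter> G) = \<mu> B" by (simp add: algebra_simps)
    thus ?thesis using eta_lt by (simp add: field_simps)
  qed
  show ?thesis using partA partB partC by blast
qed

end
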